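(* Let $R$ be a ring all of whose idempotents are central, let $I$ be an ideal of $R$, and suppose $R$ is weakly $I$-clean. Let $n\ge 1$ and let $S=\{[a_{ij}]\in T_n(R)\mid a_{ii}=a_{jj}\text{ for all }i,j\}$. Then $I'=\{[a_{ij}]\in S\mid a_{11}\in I\}$ is an ideal of $S$, the idempotents of $S$ are exactly the matrices $eI_n$ with $e\in Idem(R)$, and $S$ is weakly $I'$-clean.
   Context: All rings are associative with identity; $Idem(R)$ is the set of idempotents of $R$. $T_n(R)$ is the ring of $n\times n$ upper triangular matrices over $R$ with the usual operations, and $I_n$ is the identity matrix. For an ideal $I$ of $R$, $R$ is weakly $I$-clean if for every $x\in R$ there is $e\in Idem(R)$ such that $x-e\in I$ or $x+e\in I$. *)

theory Defs
  imports "HOL-Algebra.Algebra"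
begin

definition idems :: "('a, 'b) ring_scheme \<Rightarrow> 'a set" where
  "idems R = {e \<in> carrier R. e \<otimes>\<^bsub>R\<^esub> e = e}"

definition idempotents_central :: "('a, 'b) ring_scheme \<Rightarrow> bool" where
  "idempotents_central R \<longleftrightarrow>
     (\<forall>e \<in> idems R. \<forall>x \<in> carrier R. e \<otimes>\<^bsub>R\<^esub> x = x \<otimes>\<^bsub>R\<^esub> e)"

definition weakly_clean :: "('a, 'b) ring_scheme \<Rightarrow> 'a set \<Rightarrow> bool" where
  "weakly_clean R I \<longleftrightarrow>
     (\<forall>x \<in> carrier R. \<exists>e \<in> idems R.
        x \<ominus>\<^bsub>R\<^esub> e \<in> I \<or> x \<oplus>\<^bsub>R\<^esub> e \<in> I)"

text \<open>The ring T_n(R) of n x n upper triangular matrices over R. Matrices are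
  functions nat => nat => 'a, indices 0..n-1, entries outside the n x n block
  (and below the diagonal) are zero.\<close>
definition upper_tri_ring :: "('a, 'b) ring_scheme \<Rightarrow> nat \<Rightarrow> (nat \<Rightarrow> nat \<Rightarrow> 'a) ring" where
  "upper_tri_ring R n =
    \<lparr> carrier = {A. (\<forall>i j. A i j \<in> carrier R) \<and>
                   (\<forall>i j. (j < i \<or> n \<le> i \<or> n \<le> j) \<longrightarrow> A i j = \<zero>\<^bsub>R\<^esub>)},
      monoid.mult = (\<lambda>A B i j. if i < n \<and> j < n
                        then (\<Oplus>\<^bsub>R\<^esub> k \<in> {..<n}. A i k \<otimes>\<^bsub>R\<^esub> B k j) else \<zero>\<^bsub>R\<^esub>),
      one = (\<lambda>i j. if i = j \<and> i < n then \<one>\<^bsub>R\<^esub> else \<zero>\<^bsub>R\<^esub>),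
      ring.zero = (\<lambda>i j. \<zero>\<^bsub>R\<^esub>),
      ring.add = (\<lambda>A B i j. A i j \<oplus>\<^bsub>R\<^esub> B i j) \<rparr>"

definition const_diag_ring :: "('a, 'b) ring_scheme \<Rightarrow> nat \<Rightarrow> (nat \<Rightarrow> nat \<Rightarrow> 'a) ring" where
  "const_diag_ring R n =
    (upper_tri_ring R n) \<lparr> carrier :=
      {A \<in> carrier (upper_tri_ring R n). \<forall>i < n. \<forall>j < n. A i i = A j j} \<rparr>"

definition scalar_mat :: "('a, 'b) ring_scheme \<Rightarrow> nat \<Rightarrow> 'a \<Rightarrow> nat \<Rightarrow> nat \<Rightarrow> 'a" where
  "scalar_mat R n e = (\<lambda>i j. if i = j \<and> i < n then e else \<zero>\<^bsub>R\<^esub>)"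

end

theory Submission
  imports Defs
begin

context ring
begin

lemma S_carrier: "carrier (const_diag_ring R n) = {A. (\<forall>i j. A i j \<in> carrier R) \<and>
   (\<forall>i j. (j < i \<or> n \<le> i \<or> n \<le> j) \<longrightarrow> A i j = \<zero>) \<and> (\<forall>i < n. \<forall>j < n. A i i = A j j)}"
  by (auto simp: const_diag_ring_def upper_tri_ring_def)

lemma S_mult: "A \<otimes>\<^bsub>const_diag_ring R n\<^esub> B = (\<lambda>i j. if i < n \<and> j < n
                        then (\<Oplus> k \<in> {..<n}. A i k \<otimes> B k j) else \<zero>)"
  by (simp add: const_diag_ring_def upper_tri_ring_def)

lemma S_one: "\<one>\<^bsub>const_diag_ring R n\<^esub> = (\<lambda>i j. if i = j \<and> i < n then \<one> else \<zero>)"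
  by (simp add: const_diag_ring_def upper_tri_ring_def)

lemma S_zero: "\<zero>\<^bsub>const_diag_ring R n\<^esub> = (\<lambda>i j. \<zero>)"
  by (simp add: const_diag_ring_def upper_tri_ring_def)

lemma S_add: "A \<oplus>\<^bsub>const_diag_ring R n\<^esub> B = (\<lambda>i j. A i j \<oplus> B i j)"
  by (simp add: const_diag_ring_def upper_tri_ring_def)

lemma sum_single:
  fixes n m :: nat
  assumes "\<And>k. k \<noteq> m \<Longrightarrow> f k = \<zero>" "m < n" "\<And>k. f k \<in> carrier R"
  shows "(\<Oplus> k \<in> {..<n}. f k) = f m"
proof -
  have "(\<Oplus> k \<in> {..<n}. f k) = (\<Oplus> k \<in> {..<n}. if m = k then f k else \<zero>)"
    by (rule finsum_cong') (use assms in auto)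
  also have "\<dots> = f m"
    using finsum_singleton[of m "{..<n}" f] assms by auto
  finally show ?thesis .
qed

lemma finsum_swap:
  assumes "finite K" "finite L" "\<And>k l. f k l \<in> carrier R"
  shows "(\<Oplus> k \<in> K. \<Oplus> l \<in> L. f k l) = (\<Oplus> l \<in> L. \<Oplus> k \<in> K. f k l)"
  using assms(1)
proof (induction K rule: finite_induct)
  case empty
  then show ?case by (simp add: finsum_zero)
next
  case (insert x F)
  have "(\<Oplus> k \<in> insert x F. \<Oplus> l \<in> L. f k l) = (\<Oplus> l \<in> L. f x l) \<oplus> (\<Oplus> k \<in> F. \<Oplus> l \<in> L. f k l)"
    using insert assms by (subst finsum_insert) (auto intro: finsum_closed)
  also have "\<dots> = (\<Oplus> l \<in> L. f x l \<oplus> (\<Oplus> k \<in> F. f k l))"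
    using insert assms by (subst finsum_addf) (auto intro: finsum_closed)
  also have "\<dots> = (\<Oplus> l \<in> L. \<Oplus> k \<in> insert x F. f k l)"
    using insert assms by (intro finsum_cong') (auto simp: finsum_insert)
  finally show ?case .
qed

lemma S_carrierD:
  assumes "A \<in> carrier (const_diag_ring R n)"
  shows "\<And>i j. A i j \<in> carrier R" "\<And>i j. j < i \<Longrightarrow> A i j = \<zero>"
    "\<And>i j. n \<le> i \<Longrightarrow> A i j = \<zero>" "\<And>i j. n \<le> j \<Longrightarrow> A i j = \<zero>"
    "\<And>i j. i < n \<Longrightarrow> j < n \<Longrightarrow> A i i = A j j"
  using assms unfolding S_carrier mem_Collect_eq by blast+

lemma S_carrierI:
  assumes "\<And>i j. A i j \<in> carrier R" "\<And>i j. j < i \<or> n \<le> i \<or> n \<le> j \<Longrightarrow> A i j = \<zero>"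
    "\<And>i j. i < n \<Longrightarrow> j < n \<Longrightarrow> A i i = A j j"
  shows "A \<in> carrier (const_diag_ring R n)"
  unfolding S_carrier mem_Collect_eq using assms by blast


lemma S_add_closed:
  assumes x: "x \<in> carrier (const_diag_ring R n)" and y: "y \<in> carrier (const_diag_ring R n)"
  shows "x \<oplus>\<^bsub>const_diag_ring R n\<^esub> y \<in> carrier (const_diag_ring R n)"
  unfolding S_add
proof (rule S_carrierI)
  note X = S_carrierD[OF x] and Y = S_carrierD[OF y]
  show "\<And>i j. x i j \<oplus> y i j \<in> carrier R" using X(1) Y(1) by simp
  show "\<And>i j. j < i \<or> n \<le> i \<or> n \<le> j \<Longrightarrow> x i j \<oplus> y i j = \<zero>"
    using X(2-4) Y(2-4) by auto
  show "\<And>i j. i < n \<Longrightarrow> j < n \<Longrightarrow> x i i \<oplus> y i i = x j j \<oplus> y j j"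
    using X(5) Y(5) by metis
qed

lemma S_zero_closed: "\<zero>\<^bsub>const_diag_ring R n\<^esub> \<in> carrier (const_diag_ring R n)"
  unfolding S_zero by (rule S_carrierI) auto

lemma S_one_closed: "\<one>\<^bsub>const_diag_ring R n\<^esub> \<in> carrier (const_diag_ring R n)"
  unfolding S_one by (rule S_carrierI) auto

lemma S_neg_closed:
  assumes x: "x \<in> carrier (const_diag_ring R n)"
  shows "(\<lambda>i j. \<ominus> x i j) \<in> carrier (const_diag_ring R n)"
proof (rule S_carrierI)
  note X = S_carrierD[OF x]
  show "\<And>i j. \<ominus> x i j \<in> carrier R" using X(1) by simp
  show "\<And>i j. j < i \<or> n \<le> i \<or> n \<le> j \<Longrightarrow> \<ominus> x i j = \<zero>"
    using X(2-4) by auto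
  show "\<And>i j. i < n \<Longrightarrow> j < n \<Longrightarrow> \<ominus> x i i = \<ominus> x j j"
    using X(5) by metis
qed

lemma S_mult_diag:
  assumes x: "x \<in> carrier (const_diag_ring R n)" and y: "y \<in> carrier (const_diag_ring R n)"
    and m: "m < n"
  shows "(x \<otimes>\<^bsub>const_diag_ring R n\<^esub> y) m m = x m m \<otimes> y m m"
proof -
  note X = S_carrierD[OF x] and Y = S_carrierD[OF y]
  have "(\<Oplus> k \<in> {..<n}. x m k \<otimes> y k m) = x m m \<otimes> y m m"
  proof (rule sum_single[where f = "\<lambda>k. x m k \<otimes> y k m", OF _ m])
    fix k :: nat assume "k \<noteq> m"
    then show "x m k \<otimes> y k m = \<zero>"
      using X(1,2) Y(1,2) by (cases "k < m") auto
  qed (use X(1) Y(1) in auto)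
  then show ?thesis using m by (simp add: S_mult)
qed

lemma S_mult_closed:
  assumes x: "x \<in> carrier (const_diag_ring R n)" and y: "y \<in> carrier (const_diag_ring R n)"
  shows "x \<otimes>\<^bsub>const_diag_ring R n\<^esub> y \<in> carrier (const_diag_ring R n)"
proof (rule S_carrierI)
  note X = S_carrierD[OF x] and Y = S_carrierD[OF y]
  fix i j
  show "(x \<otimes>\<^bsub>const_diag_ring R n\<^esub> y) i j \<in> carrier R"
    using X(1) Y(1) by (simp add: S_mult finsum_closed)
  show "j < i \<or> n \<le> i \<or> n \<le> j \<Longrightarrow> (x \<otimes>\<^bsub>const_diag_ring R n\<^esub> y) i j = \<zero>"
  proof -
    assume a: "j < i \<or> n \<le> i \<or> n \<le> j"
    show ?thesis
    proof (cases "i < n \<and> j < n")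
      case True
      then have "j < i" using a by auto
      have "\<And>k. x i k \<otimes> y k j = \<zero>"
      proof -
        fix k show "x i k \<otimes> y k j = \<zero>"
          using X(1,2) Y(1,2) \<open>j < i\<close> by (cases "k < i") auto
      qed
      then have "(\<Oplus> k \<in> {..<n}. x i k \<otimes> y k j) = \<zero>" by (simp add: finsum_zero)
      then show ?thesis using True by (simp add: S_mult)
    qed (auto simp: S_mult)
  qed
  show "i < n \<Longrightarrow> j < n \<Longrightarrow> (x \<otimes>\<^bsub>const_diag_ring R n\<^esub> y) i i = (x \<otimes>\<^bsub>const_diag_ring R n\<^esub> y) j j"
    using S_mult_diag[OF x y] X(5)[of i j] Y(5)[of i j] by simp
qed

lemma S_assoc:
  assumes x: "x \<in> carrier (const_diag_ring R n)" and y: "y \<in> carrier (const_diag_ring R n)"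
      and z: "z \<in> carrier (const_diag_ring R n)"
  shows "x \<otimes>\<^bsub>const_diag_ring R n\<^esub> y \<otimes>\<^bsub>const_diag_ring R n\<^esub> z =
          x \<otimes>\<^bsub>const_diag_ring R n\<^esub> (y \<otimes>\<^bsub>const_diag_ring R n\<^esub> z)"
proof (rule ext, rule ext)
  have c: "\<And>i j. x i j \<in> carrier R" "\<And>i j. y i j \<in> carrier R" "\<And>i j. z i j \<in> carrier R"
    using S_carrierD(1)[OF x] S_carrierD(1)[OF y] S_carrierD(1)[OF z] by auto
  fix i j
  show "(x \<otimes>\<^bsub>const_diag_ring R n\<^esub> y \<otimes>\<^bsub>const_diag_ring R n\<^esub> z) i j =
      (x \<otimes>\<^bsub>const_diag_ring R n\<^esub> (y \<otimes>\<^bsub>const_diag_ring R n\<^esub> z)) i j"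
  proof (cases "i < n \<and> j < n")
    case True
    have "(x \<otimes>\<^bsub>const_diag_ring R n\<^esub> y \<otimes>\<^bsub>const_diag_ring R n\<^esub> z) i j
        = (\<Oplus> k \<in> {..<n}. (\<Oplus> l \<in> {..<n}. x i l \<otimes> y l k) \<otimes> z k j)"
      using True c by (simp add: S_mult, intro finsum_cong') (auto intro: finsum_closed)
    also have "\<dots> = (\<Oplus> k \<in> {..<n}. \<Oplus> l \<in> {..<n}. x i l \<otimes> y l k \<otimes> z k j)"
      using c by (intro finsum_cong') (auto simp: finsum_ldistr intro: finsum_closed)
    also have "\<dots> = (\<Oplus> l \<in> {..<n}. \<Oplus> k \<in> {..<n}. x i l \<otimes> y l k \<otimes> z k j)"
      using c by (intro finsum_swap) auto
    also have "\<dots> = (\<Oplus> l \<in> {..<n}. x i l \<otimes> (\<Oplus> k \<in> {..<n}. y l k \<otimes> z k j))"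
      using c by (intro finsum_cong') (auto simp: finsum_rdistr m_assoc intro: finsum_closed)
    also have "\<dots> = (x \<otimes>\<^bsub>const_diag_ring R n\<^esub> (y \<otimes>\<^bsub>const_diag_ring R n\<^esub> z)) i j"
      using True c by (simp add: S_mult, intro finsum_cong') (auto intro: finsum_closed)
    finally show ?thesis .
  qed (auto simp: S_mult)
qed

lemma S_l_one:
  assumes x: "x \<in> carrier (const_diag_ring R n)"
  shows "\<one>\<^bsub>const_diag_ring R n\<^esub> \<otimes>\<^bsub>const_diag_ring R n\<^esub> x = x"
proof (rule ext, rule ext)
  note X = S_carrierD[OF x]
  fix i j show "(\<one>\<^bsub>const_diag_ring R n\<^esub> \<otimes>\<^bsub>const_diag_ring R n\<^esub> x) i j = x i j"
  proof (cases "i < n \<and> j < n")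
    case True
    have "(\<Oplus> k \<in> {..<n}. (if i = k \<and> i < n then \<one> else \<zero>) \<otimes> x k j) =
         (if i = i \<and> i < n then \<one> else \<zero>) \<otimes> x i j"
      by (rule sum_single[where f = "\<lambda>k. (if i = k \<and> i < n then \<one> else \<zero>) \<otimes> x k j"])
         (use True X(1) in auto)
    then show ?thesis using True X(1) by (simp add: S_mult S_one)
  next
    case False
    then show ?thesis using X(3,4) by (auto simp: S_mult)
  qed
qed

lemma S_r_one:
  assumes x: "x \<in> carrier (const_diag_ring R n)"
  shows "x \<otimes>\<^bsub>const_diag_ring R n\<^esub> \<one>\<^bsub>const_diag_ring R n\<^esub> = x"
proof (rule ext, rule ext)
  note X = S_carrierD[OF x]
  fix i j show "(x \<otimes>\<^bsub>const_diag_ring R n\<^esub> \<one>\<^bsub>const_diag_ring R n\<^esub>) i j = x i j"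
  proof (cases "i < n \<and> j < n")
    case True
    have "(\<Oplus> k \<in> {..<n}. x i k \<otimes> (if k = j \<and> k < n then \<one> else \<zero>)) =
         x i j \<otimes> (if j = j \<and> j < n then \<one> else \<zero>)"
      by (rule sum_single[where f = "\<lambda>k. x i k \<otimes> (if k = j \<and> k < n then \<one> else \<zero>)"])
         (use True X(1) in auto)
    then show ?thesis using True X(1) by (simp add: S_mult S_one)
  next
    case False
    then show ?thesis using X(3,4) by (auto simp: S_mult)
  qed
qed

lemma S_ring: "ring (const_diag_ring R n)"
proof (rule ringI)
  show "abelian_group (const_diag_ring R n)"
  proof (rule abelian_groupI)
    fix x y assume "x \<in> carrier (const_diag_ring R n)" "y \<in> carrier (const_diag_ring R n)"
    then show "x \<oplus>\<^bsub>const_diag_ring R n\<^esub> y \<in> carrier (const_diag_ring R n)"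
      by (rule S_add_closed)
  next
    show "\<zero>\<^bsub>const_diag_ring R n\<^esub> \<in> carrier (const_diag_ring R n)"
      by (rule S_zero_closed)
  next
    fix x y z assume "x \<in> carrier (const_diag_ring R n)" "y \<in> carrier (const_diag_ring R n)"
      "z \<in> carrier (const_diag_ring R n)"
    then show "x \<oplus>\<^bsub>const_diag_ring R n\<^esub> y \<oplus>\<^bsub>const_diag_ring R n\<^esub> z =
       x \<oplus>\<^bsub>const_diag_ring R n\<^esub> (y \<oplus>\<^bsub>const_diag_ring R n\<^esub> z)"
      using S_carrierD(1) by (simp add: S_add a_assoc)
  next
    fix x y assume "x \<in> carrier (const_diag_ring R n)" "y \<in> carrier (const_diag_ring R n)"
    then show "x \<oplus>\<^bsub>const_diag_ring R n\<^esub> y = y \<oplus>\<^bsub>const_diag_ring R n\<^esub> x"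
      using S_carrierD(1) by (simp add: S_add a_comm)
  next
    fix x assume "x \<in> carrier (const_diag_ring R n)"
    then show "\<zero>\<^bsub>const_diag_ring R n\<^esub> \<oplus>\<^bsub>const_diag_ring R n\<^esub> x = x"
      using S_carrierD(1) by (simp add: S_add S_zero)
  next
    fix x assume x: "x \<in> carrier (const_diag_ring R n)"
    show "\<exists>y\<in>carrier (const_diag_ring R n). y \<oplus>\<^bsub>const_diag_ring R n\<^esub> x = \<zero>\<^bsub>const_diag_ring R n\<^esub>"
      by (rule bexI[OF _ S_neg_closed[OF x]]) (use S_carrierD(1)[OF x] in \<open>simp add: S_add S_zero l_neg\<close>)
  qed
next
  show "monoid (const_diag_ring R n)"
    by (rule monoidI) (auto intro: S_mult_closed S_one_closed S_assoc S_l_one S_r_one)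
next
  fix x y z assume x: "x \<in> carrier (const_diag_ring R n)" and y: "y \<in> carrier (const_diag_ring R n)"
      and z: "z \<in> carrier (const_diag_ring R n)"
  have c: "\<And>i j. x i j \<in> carrier R" "\<And>i j. y i j \<in> carrier R" "\<And>i j. z i j \<in> carrier R"
    using S_carrierD(1)[OF x] S_carrierD(1)[OF y] S_carrierD(1)[OF z] by auto
  show "(x \<oplus>\<^bsub>const_diag_ring R n\<^esub> y) \<otimes>\<^bsub>const_diag_ring R n\<^esub> z =
        x \<otimes>\<^bsub>const_diag_ring R n\<^esub> z \<oplus>\<^bsub>const_diag_ring R n\<^esub> y \<otimes>\<^bsub>const_diag_ring R n\<^esub> z"
  proof (rule ext, rule ext)
    fix i j
    have "(\<Oplus> k \<in> {..<n}. (x i k \<oplus> y i k) \<otimes> z k j) = (\<Oplus> k \<in> {..<n}. x i k \<otimes> z k j \<oplus> y i k \<otimes> z k j)"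
      by (intro finsum_cong') (auto simp: l_distr c)
    also have "\<dots> = (\<Oplus> k \<in> {..<n}. x i k \<otimes> z k j) \<oplus> (\<Oplus> k \<in> {..<n}. y i k \<otimes> z k j)"
      by (rule finsum_addf) (auto simp: c)
    finally show "((x \<oplus>\<^bsub>const_diag_ring R n\<^esub> y) \<otimes>\<^bsub>const_diag_ring R n\<^esub> z) i j =
        (x \<otimes>\<^bsub>const_diag_ring R n\<^esub> z \<oplus>\<^bsub>const_diag_ring R n\<^esub> y \<otimes>\<^bsub>const_diag_ring R n\<^esub> z) i j"
      by (simp add: S_mult S_add)
  qed
  show "z \<otimes>\<^bsub>const_diag_ring R n\<^esub> (x \<oplus>\<^bsub>const_diag_ring R n\<^esub> y) =
        z \<otimes>\<^bsub>const_diag_ring R n\<^esub> x \<oplus>\<^bsub>const_diag_ring R n\<^esub> z \<otimes>\<^bsub>const_diag_ring R n\<^esub> y"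
  proof (rule ext, rule ext)
    fix i j
    have "(\<Oplus> k \<in> {..<n}. z i k \<otimes> (x k j \<oplus> y k j)) = (\<Oplus> k \<in> {..<n}. z i k \<otimes> x k j \<oplus> z i k \<otimes> y k j)"
      by (intro finsum_cong') (auto simp: r_distr c)
    also have "\<dots> = (\<Oplus> k \<in> {..<n}. z i k \<otimes> x k j) \<oplus> (\<Oplus> k \<in> {..<n}. z i k \<otimes> y k j)"
      by (rule finsum_addf) (auto simp: c)
    finally show "(z \<otimes>\<^bsub>const_diag_ring R n\<^esub> (x \<oplus>\<^bsub>const_diag_ring R n\<^esub> y)) i j =
        (z \<otimes>\<^bsub>const_diag_ring R n\<^esub> x \<oplus>\<^bsub>const_diag_ring R n\<^esub> z \<otimes>\<^bsub>const_diag_ring R n\<^esub> y) i j"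
      by (simp add: S_mult S_add)
  qed
qed


lemma S_neg:
  assumes x: "x \<in> carrier (const_diag_ring R n)"
  shows "\<ominus>\<^bsub>const_diag_ring R n\<^esub> x = (\<lambda>i j. \<ominus> x i j)"
proof -
  interpret S: ring "const_diag_ring R n" by (rule S_ring)
  show ?thesis
    by (rule S.minus_equality[OF _ x S_neg_closed[OF x]])
       (use S_carrierD(1)[OF x] in \<open>simp add: S_add S_zero l_neg\<close>)
qed

lemma S_ideal:
  assumes I: "ideal I R" and n: "0 < n"
  shows "ideal {A \<in> carrier (const_diag_ring R n). A 0 0 \<in> I} (const_diag_ring R n)"
proof -
  interpret S: ring "const_diag_ring R n" by (rule S_ring)
  interpret I: ideal I R by (rule I)
  show ?thesis
  proof (rule idealI[OF S_ring])
    show "subgroup {A \<in> carrier (const_diag_ring R n). A 0 0 \<in> I} (add_monoid (const_diag_ring R n))"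
    proof (rule S.add.subgroupI)
      show "{A \<in> carrier (const_diag_ring R n). A 0 0 \<in> I} \<subseteq> carrier (const_diag_ring R n)"
        by auto
      show "{A \<in> carrier (const_diag_ring R n). A 0 0 \<in> I} \<noteq> {}"
        using S_zero_closed[of n] I.zero_closed by (auto simp: S_zero)
    next
      fix a assume a: "a \<in> {A \<in> carrier (const_diag_ring R n). A 0 0 \<in> I}"
      then show "\<ominus>\<^bsub>const_diag_ring R n\<^esub> a \<in> {A \<in> carrier (const_diag_ring R n). A 0 0 \<in> I}"
        using S_neg[of a n] I.a_inv_closed S_neg_closed[of a n] by auto
    next
      fix a b assume a: "a \<in> {A \<in> carrier (const_diag_ring R n). A 0 0 \<in> I}"
        and b: "b \<in> {A \<in> carrier (const_diag_ring R n). A 0 0 \<in> I}"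
      then show "a \<oplus>\<^bsub>const_diag_ring R n\<^esub> b \<in> {A \<in> carrier (const_diag_ring R n). A 0 0 \<in> I}"
        using S_add_closed[of a n b] I.a_closed by (auto simp: S_add)
    qed
  next
    fix a x assume a: "a \<in> {A \<in> carrier (const_diag_ring R n). A 0 0 \<in> I}"
      and x: "x \<in> carrier (const_diag_ring R n)"
    then show "x \<otimes>\<^bsub>const_diag_ring R n\<^esub> a \<in> {A \<in> carrier (const_diag_ring R n). A 0 0 \<in> I}"
      using S_mult_closed[OF x, of a] S_mult_diag[OF x, of a 0] n I.I_l_closed S_carrierD(1)[OF x]
      by auto
  next
    fix a x assume a: "a \<in> {A \<in> carrier (const_diag_ring R n). A 0 0 \<in> I}"
      and x: "x \<in> carrier (const_diag_ring R n)"
    then show "a \<otimes>\<^bsub>const_diag_ring R n\<^esub> x \<in> {A \<in> carrier (const_diag_ring R n). A 0 0 \<in> I}"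
      using S_mult_closed[OF _ x, of a] S_mult_diag[OF _ x, of a 0] n I.I_r_closed S_carrierD(1)[OF x]
      by auto
  qed
qed

lemma scalar_in_S:
  assumes e: "e \<in> carrier R"
  shows "scalar_mat R n e \<in> carrier (const_diag_ring R n)"
  unfolding scalar_mat_def by (rule S_carrierI) (use e in auto)

lemma scalar_idem:
  assumes e: "e \<in> idems R"
  shows "scalar_mat R n e \<in> idems (const_diag_ring R n)"
proof -
  have ec: "e \<in> carrier R" and ee: "e \<otimes> e = e" using e by (auto simp: idems_def)
  have "scalar_mat R n e \<otimes>\<^bsub>const_diag_ring R n\<^esub> scalar_mat R n e = scalar_mat R n e"
  proof (rule ext, rule ext)
    fix i j
    show "(scalar_mat R n e \<otimes>\<^bsub>const_diag_ring R n\<^esub> scalar_mat R n e) i j = scalar_mat R n e i j"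
    proof (cases "i < n \<and> j < n")
      case True
      have "(\<Oplus> k \<in> {..<n}. scalar_mat R n e i k \<otimes> scalar_mat R n e k j) =
            scalar_mat R n e i i \<otimes> scalar_mat R n e i j"
        by (rule sum_single[where f = "\<lambda>k. scalar_mat R n e i k \<otimes> scalar_mat R n e k j"])
           (use True ec in \<open>auto simp: scalar_mat_def\<close>)
      then show ?thesis using True ec ee by (simp add: S_mult scalar_mat_def)
    qed (auto simp: S_mult scalar_mat_def)
  qed
  then show ?thesis using scalar_in_S[OF ec] by (simp add: idems_def)
qed

lemma self_add_zero:
  assumes "y \<in> carrier R" "y = y \<oplus> y"
  shows "y = \<zero>"
  using assms by (metis add.l_cancel r_zero zero_closed)

lemma idem_scalar:
  assumes cent: "idempotents_central R" and A: "A \<in> carrier (const_diag_ring R n)"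
    and AA: "A \<otimes>\<^bsub>const_diag_ring R n\<^esub> A = A" and n: "0 < n"
  shows "A 0 0 \<in> idems R \<and> A = scalar_mat R n (A 0 0)"
proof -
  note X = S_carrierD[OF A]
  define a where "a = A 0 0"
  have a: "a \<in> carrier R" using X(1) by (simp add: a_def)
  have diag: "\<And>i. i < n \<Longrightarrow> A i i = a" using X(5) n unfolding a_def by blast
  have "a \<otimes> a = a" using S_mult_diag[OF A A n] AA unfolding a_def by simp
  then have aI: "a \<in> idems R" using a by (simp add: idems_def)
  have comm: "\<And>x. x \<in> carrier R \<Longrightarrow> a \<otimes> x = x \<otimes> a"
    using cent aI unfolding idempotents_central_def by blast
  have entry: "\<And>i j. i < n \<Longrightarrow> j < n \<Longrightarrow> A i j = (\<Oplus> k \<in> {..<n}. A i k \<otimes> A k j)"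
  proof -
    fix i j assume "i < n" "j < n"
    have "(A \<otimes>\<^bsub>const_diag_ring R n\<^esub> A) i j = A i j" using AA by simp
    then show "A i j = (\<Oplus> k \<in> {..<n}. A i k \<otimes> A k j)" using \<open>i < n\<close> \<open>j < n\<close> by (simp add: S_mult)
  qed
  have offd: "\<forall>i j. j - i = d \<longrightarrow> i < j \<longrightarrow> j < n \<longrightarrow> A i j = \<zero>" for d
  proof (induction d rule: less_induct)
    case (less d)
    show ?case
    proof (intro allI impI)
      fix i j assume d: "j - i = d" and ij: "i < j" "j < n"
      have IH: "\<And>p q. q - p < d \<Longrightarrow> p < q \<Longrightarrow> q < n \<Longrightarrow> A p q = \<zero>" using less by blast
      define x where "x = A i j"
      have xc: "x \<in> carrier R" using X(1) by (simp add: x_def)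
      have "x = (\<Oplus> k \<in> {..<n}. A i k \<otimes> A k j)" using entry ij unfolding x_def by simp
      also have "\<dots> = (\<Oplus> k \<in> {..<n}. (if k = i then a \<otimes> x else \<zero>) \<oplus> (if k = j then x \<otimes> a else \<zero>))"
      proof (rule finsum_cong'[OF refl])
        show "(\<lambda>k. (if k = i then a \<otimes> x else \<zero>) \<oplus> (if k = j then x \<otimes> a else \<zero>)) \<in> {..<n} \<rightarrow> carrier R"
          using a xc by auto
      next
        fix k assume k: "k \<in> {..<n}"
        show "A i k \<otimes> A k j = (if k = i then a \<otimes> x else \<zero>) \<oplus> (if k = j then x \<otimes> a else \<zero>)"
        proof (cases "k = i")
          case True
          then show ?thesis using ij diag[of i] a xc unfolding x_def by simp
        next
          case ki: False
          show ?thesis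
          proof (cases "k = j")
            case True
            then show ?thesis using ij ki diag[of j] a xc unfolding x_def by simp
          next
            case kj: False
            have "A i k \<otimes> A k j = \<zero>"
            proof (cases "k < i")
              case True then show ?thesis using X(1,2) by simp
            next
              case False
              show ?thesis
              proof (cases "j < k")
                case True then show ?thesis using X(1,2) by simp
              next
                case False
                then have "A i k = \<zero>" using IH[of k i] \<open>\<not> k < i\<close> ki kj ij d by simp
                then show ?thesis using X(1) by simp
              qed
            qed
            then show ?thesis using ki kj by simp
          qed
        qed
      qed
      also have "\<dots> = (\<Oplus> k \<in> {..<n}. if k = i then a \<otimes> x else \<zero>) \<oplus> (\<Oplus> k \<in> {..<n}. if k = j then x \<otimes> a else \<zero>)"
        by (rule finsum_addf) (use a xc in auto)
      also have "\<dots> = a \<otimes> x \<oplus> x \<otimes> a"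
        using add.finprod_singleton_swap[of i "{..<n}" "\<lambda>_. a \<otimes> x"] add.finprod_singleton_swap[of j "{..<n}" "\<lambda>_. x \<otimes> a"]
          ij a xc by simp
      also have "\<dots> = a \<otimes> x \<oplus> a \<otimes> x" using comm[OF xc] by simp
      finally have eq: "x = a \<otimes> x \<oplus> a \<otimes> x" .
      have "a \<otimes> x = a \<otimes> (a \<otimes> x \<oplus> a \<otimes> x)" using eq by simp
      also have "\<dots> = a \<otimes> x \<oplus> a \<otimes> x"
        using a xc \<open>a \<otimes> a = a\<close> by (simp add: r_distr m_assoc[symmetric])
      finally have "a \<otimes> x = \<zero>" by (rule self_add_zero[rotated]) (use a xc in simp)
      then show "A i j = \<zero>" using eq unfolding x_def by simp
    qed
  qed
  have "A = scalar_mat R n a"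
  proof (rule ext, rule ext)
    fix i j
    show "A i j = scalar_mat R n a i j"
    proof (cases "i = j \<and> i < n")
      case True then show ?thesis using diag by (simp add: scalar_mat_def)
    next
      case False
      then consider "j < i" | "n \<le> i" | "n \<le> j" | "i < j \<and> j < n" by linarith
      then show ?thesis
        using False X(2,3,4) offd[of "j - i"] by cases (auto simp: scalar_mat_def)
    qed
  qed
  then show ?thesis using aI unfolding a_def by simp
qed

lemma S_idems:
  assumes cent: "idempotents_central R" and n: "0 < n"
  shows "idems (const_diag_ring R n) = scalar_mat R n ` idems R"
proof
  show "idems (const_diag_ring R n) \<subseteq> scalar_mat R n ` idems R"
  proof
    fix A assume "A \<in> idems (const_diag_ring R n)"
    then have "A \<in> carrier (const_diag_ring R n)" "A \<otimes>\<^bsub>const_diag_ring R n\<^esub> A = A"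
      by (auto simp: idems_def)
    from idem_scalar[OF cent this n] show "A \<in> scalar_mat R n ` idems R" by blast
  qed
  show "scalar_mat R n ` idems R \<subseteq> idems (const_diag_ring R n)"
    using scalar_idem by blast
qed

end

theorem mainTheorem4:
  fixes R :: "('a, 'b) ring_scheme" and I :: "'a set" and n :: nat
  assumes "ring R"
    and "idempotents_central R"
    and "ideal I R"
    and "weakly_clean R I"
    and "1 \<le> n"
  shows "ideal {A \<in> carrier (const_diag_ring R n). A 0 0 \<in> I} (const_diag_ring R n)
       \<and> idems (const_diag_ring R n) = scalar_mat R n ` idems R
       \<and> weakly_clean (const_diag_ring R n) {A \<in> carrier (const_diag_ring R n). A 0 0 \<in> I}"
proof -
  interpret ring R by fact
  interpret S: ring "const_diag_ring R n" by (rule S_ring)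
  have n: "0 < n" using assms(5) by simp
  have 1: "ideal {A \<in> carrier (const_diag_ring R n). A 0 0 \<in> I} (const_diag_ring R n)"
    by (rule S_ideal[OF assms(3) n])
  have 2: "idems (const_diag_ring R n) = scalar_mat R n ` idems R"
    by (rule S_idems[OF assms(2) n])
  have 3: "weakly_clean (const_diag_ring R n) {A \<in> carrier (const_diag_ring R n). A 0 0 \<in> I}"
    unfolding weakly_clean_def
  proof
    fix A assume A: "A \<in> carrier (const_diag_ring R n)"
    have a: "A 0 0 \<in> carrier R" using S_carrierD(1)[OF A] .
    obtain e where e: "e \<in> idems R" and eI: "A 0 0 \<ominus>\<^bsub>R\<^esub> e \<in> I \<or> A 0 0 \<oplus>\<^bsub>R\<^esub> e \<in> I"
    proof -
      have "\<forall>x \<in> carrier R. \<exists>e \<in> idems R. x \<ominus>\<^bsub>R\<^esub> e \<in> I \<or> x \<oplus>\<^bsub>R\<^esub> e \<in> I"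
        using assms(4) unfolding weakly_clean_def .
      then have "\<exists>e \<in> idems R. A 0 0 \<ominus>\<^bsub>R\<^esub> e \<in> I \<or> A 0 0 \<oplus>\<^bsub>R\<^esub> e \<in> I"
        using a by (rule bspec)
      then show ?thesis using that by (rule bexE)
    qed
    have ec: "e \<in> carrier R" using e by (simp add: idems_def)
    define E where "E = scalar_mat R n e"
    have EI: "E \<in> idems (const_diag_ring R n)" unfolding E_def by (rule scalar_idem[OF e])
    have Ec: "E \<in> carrier (const_diag_ring R n)" unfolding E_def by (rule scalar_in_S[OF ec])
    have E00: "E 0 0 = e" using n by (simp add: E_def scalar_mat_def)
    have m: "(A \<ominus>\<^bsub>const_diag_ring R n\<^esub> E) 0 0 = A 0 0 \<ominus>\<^bsub>R\<^esub> e"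
      using E00 by (simp add: a_minus_def S_neg[OF Ec] S_add)
    have p: "(A \<oplus>\<^bsub>const_diag_ring R n\<^esub> E) 0 0 = A 0 0 \<oplus>\<^bsub>R\<^esub> e"
      using E00 by (simp add: S_add)
    have c1: "A \<ominus>\<^bsub>const_diag_ring R n\<^esub> E \<in> carrier (const_diag_ring R n)"
      using A Ec by (rule S.minus_closed)
    have c2: "A \<oplus>\<^bsub>const_diag_ring R n\<^esub> E \<in> carrier (const_diag_ring R n)"
      using A Ec by (rule S.add.m_closed)
    show "\<exists>e\<in>idems (const_diag_ring R n).
        A \<ominus>\<^bsub>const_diag_ring R n\<^esub> e \<in> {A \<in> carrier (const_diag_ring R n). A 0 0 \<in> I} \<or>
        A \<oplus>\<^bsub>const_diag_ring R n\<^esub> e \<in> {A \<in> carrier (const_diag_ring R n). A 0 0 \<in> I}"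
    proof -
      have "A \<ominus>\<^bsub>const_diag_ring R n\<^esub> E \<in> {A \<in> carrier (const_diag_ring R n). A 0 0 \<in> I} \<or>
        A \<oplus>\<^bsub>const_diag_ring R n\<^esub> E \<in> {A \<in> carrier (const_diag_ring R n). A 0 0 \<in> I}"
        using eI m p c1 c2 by simp
      then show ?thesis using EI by (rule bexI)
    qed
  qed
  show ?thesis using 1 2 3 by (intro conjI)
qed

end
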